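(* The capacity region $\mathcal{C}_D$ of the deterministic many-to-one interference channel with gains $n_{ii}$ ($0\le i\le K$) and $n_{0i}$ ($1\le i\le K$) is contained in the set $\overline{\mathcal{C}}$ of nonnegative rate tuples $(r_0,\dots,r_K)$ satisfying the individual rate constraints $$r_i\le n_{ii},\qquad 0\le i\le K,$$ and the $2^K-1$ sum-rate constraints $$r_0+\sum_{i\in S}r_i\le f_{\rm free}(S)+\sum_{k=1}^{n_{00}}f_k(S),\qquad \varnothing\neq S\subseteq\{1,\dots,K\}.$$
   Context: Deterministic many-to-one interference channel: there are $K+1$ users $0,1,\dots,K$ with nonnegative integer gains $n_{ii}$ ($0\le i\le K$) and $n_{0i}$ ($1\le i\le K$); let $q=\max$ of all these gains. At each time the input of user $i$ is $x_i\in\mathbb{F}_2^q$, the outputs are $y_0=\sum_{j=0}^K \mathbf{S}^{q-n_{0j}}x_j$ (with $n_{00}$ the direct gain of user 0) and $y_i=\mathbf{S}^{q-n_{ii}}x_i$ for $1\le i\le K$, where arithmetic is over $\mathbb{F}_2$ and $\mathbf S$ is the $q\times q$ down-shift matrix (ones on the subdiagonal, zeros elsewhere). Each transmitter $i$ has an independent uniformly distributed message to be decoded by receiver $i$; the capacity region is the closure of the set of rate tuples (bits per channel use) for which the error probabilities can be made to vanish. Notation: $(a)^+=\max(a,0)$. For $1\le k\le n_{00}$ let $U_k=\{i:1\le i\le K,\ n_{0i}-n_{ii}<k\le n_{0i}\}$ (the users interfering at level $k$ of receiver 0). For $S\subseteq\{1,\dots,K\}$ let $f_k(S)=\max(|U_k\cap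 S|,1)$, $f_{\rm free}(i)=(n_{ii}-n_{0i})^+ +(n_{0i}-n_{00})^+$ and $f_{\rm free}(S)=\sum_{i\in S}f_{\rm free}(i)$. *)

theory Defs
  imports "HOL-Analysis.Analysis"
begin

text \<open>Gains are given by n :: nat => nat => nat: n i i is the direct gain n_ii (0 <= i <= K),
  n 0 i is the cross gain n_0i (1 <= i <= K).  Vectors of F_2^q are functions nat => bool
  (only indices < q matter, index 0 = top level); False/True = 0/1 in F_2.
  Rate tuples are functions nat => real, with r i = 0 for i > K (product topology).\<close>

definition qmax :: "nat \<Rightarrow> (nat \<Rightarrow> nat \<Rightarrow> nat) \<Rightarrow> nat" where
  "qmax K n = Max ({n i i | i. i \<le> K} \<union> {n 0 i | i. 1 \<le> i \<and> i \<le> K})"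

text \<open>(S^m x) for the q x q down-shift matrix S (ones on the subdiagonal).\<close>
definition shiftv :: "nat \<Rightarrow> nat \<Rightarrow> (nat \<Rightarrow> bool) \<Rightarrow> nat \<Rightarrow> bool" where
  "shiftv q m x r = (r < q \<and> m \<le> r \<and> x (r - m))"

definition chan_out :: "nat \<Rightarrow> (nat \<Rightarrow> nat \<Rightarrow> nat) \<Rightarrow> nat \<Rightarrow> (nat \<Rightarrow> nat \<Rightarrow> bool) \<Rightarrow> nat \<Rightarrow> bool" where
  "chan_out K n i x =
     (if i = 0 then (\<lambda>r. odd (card {j \<in> {0..K}. shiftv (qmax K n) (qmax K n - n 0 j) (x j) r}))
      else shiftv (qmax K n) (qmax K n - n i i) (x i))"

text \<open>A code of block length N: enc j w t = input vector of user j at time t for message w;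
  dec i = decoder of receiver i applied to its received sequence (time => level => bit).\<close>
definition received :: "nat \<Rightarrow> (nat \<Rightarrow> nat \<Rightarrow> nat) \<Rightarrow> nat \<Rightarrow> (nat \<Rightarrow> nat \<Rightarrow> nat \<Rightarrow> nat \<Rightarrow> bool)
    \<Rightarrow> nat \<Rightarrow> (nat \<Rightarrow> nat) \<Rightarrow> nat \<Rightarrow> nat \<Rightarrow> bool" where
  "received K n N enc i w = (\<lambda>t. if t < N then chan_out K n i (\<lambda>j. enc j (w j) t) else (\<lambda>_. False))"

definition err_prob :: "nat \<Rightarrow> (nat \<Rightarrow> nat \<Rightarrow> nat) \<Rightarrow> nat \<Rightarrow> (nat \<Rightarrow> nat)
    \<Rightarrow> (nat \<Rightarrow> nat \<Rightarrow> nat \<Rightarrow> nat \<Rightarrow> bool) \<Rightarrow> (nat \<Rightarrow> (nat \<Rightarrow> nat \<Rightarrow> bool) \<Rightarrow> nat) \<Rightarrow> nat \<Rightarrow> real" where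
  "err_prob K n N m enc dec i =
     real (card {w \<in> PiE {0..K} (\<lambda>j. {..<m j}). dec i (received K n N enc i w) \<noteq> w i})
     / real (\<Prod>j\<in>{0..K}. m j)"

definition achievable :: "nat \<Rightarrow> (nat \<Rightarrow> nat \<Rightarrow> nat) \<Rightarrow> (nat \<Rightarrow> real) \<Rightarrow> bool" where
  "achievable K n r \<longleftrightarrow> (\<forall>i. 0 \<le> r i) \<and> (\<forall>i>K. r i = 0) \<and>
     (\<forall>\<epsilon>>0. \<exists>N0. \<forall>N\<ge>N0. \<exists>m enc dec.
        (\<forall>i\<le>K. 2 powr (real N * r i) \<le> real (m i)) \<and>
        (\<forall>i\<le>K. err_prob K n N m enc dec i \<le> \<epsilon>))"

definition capacity_region :: "nat \<Rightarrow> (nat \<Rightarrow> nat \<Rightarrow> nat) \<Rightarrow> (nat \<Rightarrow> real) set" where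
  "capacity_region K n = closure {r. achievable K n r}"

definition U :: "nat \<Rightarrow> (nat \<Rightarrow> nat \<Rightarrow> nat) \<Rightarrow> nat \<Rightarrow> nat set" where
  "U K n k = {i. 1 \<le> i \<and> i \<le> K \<and> n 0 i < k + n i i \<and> k \<le> n 0 i}"

definition f_lvl :: "nat \<Rightarrow> (nat \<Rightarrow> nat \<Rightarrow> nat) \<Rightarrow> nat \<Rightarrow> nat set \<Rightarrow> nat" where
  "f_lvl K n k S = max (card (U K n k \<inter> S)) 1"

definition f_free :: "(nat \<Rightarrow> nat \<Rightarrow> nat) \<Rightarrow> nat \<Rightarrow> nat" where
  "f_free n i = (n i i - n 0 i) + (n 0 i - n 0 0)"

definition outer_bound :: "nat \<Rightarrow> (nat \<Rightarrow> nat \<Rightarrow> nat) \<Rightarrow> (nat \<Rightarrow> real) set" where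
  "outer_bound K n = {r. (\<forall>i. 0 \<le> r i) \<and> (\<forall>i>K. r i = 0) \<and> (\<forall>i\<le>K. r i \<le> real (n i i)) \<and>
     (\<forall>S. S \<subseteq> {1..K} \<and> S \<noteq> {} \<longrightarrow>
        r 0 + (\<Sum>i\<in>S. r i) \<le> real ((\<Sum>i\<in>S. f_free n i) + (\<Sum>k=1..n 0 0. f_lvl K n k S)))}"

end

theory Submission imports Defs begin

lemma card_W: "card (PiE {0..K::nat} (\<lambda>j. {..<m j})) = (\<Prod>j\<in>{0..K}. m j)"
  using card_PiE[of "{0..K}" "\<lambda>j. {..<m j}"] by simp

lemma main_count:
  fixes obs :: "(nat \<Rightarrow> nat) \<Rightarrow> 'o" and Ob :: "'o set"
  assumes T: "T \<subseteq> {0..K}" and mpos: "\<forall>j\<le>K. 0 < m j"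
  and err: "\<forall>i\<in>T. err_prob K n N m enc dec i \<le> \<epsilon>"
  and inj: "\<And>w w'. w \<in> PiE {0..K} (\<lambda>j. {..<m j}) \<Longrightarrow> w' \<in> PiE {0..K} (\<lambda>j. {..<m j}) \<Longrightarrow>
      (\<forall>i\<in>T. dec i (received K n N enc i w) = w i) \<Longrightarrow> (\<forall>i\<in>T. dec i (received K n N enc i w') = w' i) \<Longrightarrow>
      obs w = obs w' \<Longrightarrow> (\<forall>j\<in>{0..K}-T. w j = w' j) \<Longrightarrow> w = w'"
  and obsOb: "\<And>w. w \<in> PiE {0..K} (\<lambda>j. {..<m j}) \<Longrightarrow> obs w \<in> Ob" and finOb: "finite Ob"
  shows "(1 - real (card T) * \<epsilon>) * (\<Prod>j\<in>T. real (m j)) \<le> real (card Ob)"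
proof -
  define W where "W = PiE {0..K} (\<lambda>j. {..<m j})"
  define Good where "Good = {w\<in>W. \<forall>i\<in>T. dec i (received K n N enc i w) = w i}"
  define Bad where "Bad i = {w\<in>W. dec i (received K n N enc i w) \<noteq> w i}" for i
  define Tc where "Tc = {0..K} - T"
  have finW: "finite W" unfolding W_def by (simp add: finite_PiE)
  have finT: "finite T" using T finite_subset by blast
  have PW: "real (card W) = (\<Prod>j\<in>T. real (m j)) * (\<Prod>j\<in>Tc. real (m j))"
  proof -
    have "real (card W) = (\<Prod>j\<in>{0..K}. real (m j))" unfolding W_def card_W by simp
    also have "{0..K} = T \<union> Tc" using T unfolding Tc_def by auto
    also have "(\<Prod>j\<in>T \<union> Tc. real (m j)) = (\<Prod>j\<in>T. real (m j)) * (\<Prod>j\<in>Tc. real (m j))"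
      by (rule prod.union_disjoint) (auto simp: Tc_def finT)
    finally show ?thesis .
  qed
  have Tcpos: "(\<Prod>j\<in>Tc. real (m j)) > 0"
    using mpos by (intro prod_pos) (auto simp: Tc_def)
  have Wpos: "(\<Prod>j\<in>{0..K}. real (m j)) > 0"
    using mpos by (intro prod_pos) auto
  have badle: "real (card (Bad i)) \<le> \<epsilon> * real (card W)" if "i \<in> T" for i
  proof -
    have "err_prob K n N m enc dec i = real (card (Bad i)) / real (card W)"
      unfolding err_prob_def Bad_def W_def card_W by simp
    moreover have "real (card W) > 0" unfolding W_def card_W using Wpos by simp
    ultimately have "real (card (Bad i)) / real (card W) \<le> \<epsilon>" and "real (card W) > 0" using err that by auto
    thus ?thesis by (simp add: pos_divide_le_eq mult.commute)
  qed
  have "W - Good = (\<Union>i\<in>T. Bad i)" unfolding Good_def Bad_def by auto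
  hence "card (W - Good) \<le> (\<Sum>i\<in>T. card (Bad i))" using card_UN_le[OF finT, of Bad] by simp
  hence "real (card (W - Good)) \<le> (\<Sum>i\<in>T. real (card (Bad i)))" by (metis of_nat_le_iff of_nat_sum)
  also have "\<dots> \<le> (\<Sum>i\<in>T. \<epsilon> * real (card W))" by (rule sum_mono) (use badle in auto)
  finally have bad: "real (card (W - Good)) \<le> real (card T) * \<epsilon> * real (card W)" by simp
  have GW: "Good \<subseteq> W" unfolding Good_def by auto
  have cG: "real (card Good) = real (card W) - real (card (W - Good))"
    using card_Diff_subset[OF finite_subset[OF GW finW] GW] card_mono[OF finW GW] by simp
  have low: "(1 - real (card T) * \<epsilon>) * real (card W) \<le> real (card Good)"
    using cG bad by (simp add: algebra_simps)
  define f where "f w = (obs w, restrict w Tc)" for w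
  have injf: "inj_on f Good"
  proof (rule inj_onI)
    fix w w' assume a: "w \<in> Good" "w' \<in> Good" "f w = f w'"
    hence o: "obs w = obs w'" and r: "restrict w Tc = restrict w' Tc" unfolding f_def by auto
    have "\<forall>j\<in>{0..K}-T. w j = w' j"
    proof
      fix j assume "j \<in> {0..K} - T"
      hence "j \<in> Tc" unfolding Tc_def by auto
      thus "w j = w' j" using fun_cong[OF r, of j] by simp
    qed
    thus "w = w'" using inj[of w w'] a o unfolding Good_def W_def by auto
  qed
  have fG: "f ` Good \<subseteq> Ob \<times> PiE Tc (\<lambda>j. {..<m j})"
  proof
    fix x assume "x \<in> f ` Good"
    then obtain w where w: "w \<in> Good" "x = f w" by auto
    have "w \<in> W" using w GW by auto
    hence "obs w \<in> Ob" using obsOb unfolding W_def by auto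
    moreover have "restrict w Tc \<in> PiE Tc (\<lambda>j. {..<m j})"
      using \<open>w \<in> W\<close> unfolding W_def Tc_def by (auto simp: PiE_iff)
    ultimately show "x \<in> Ob \<times> PiE Tc (\<lambda>j. {..<m j})" using w unfolding f_def by auto
  qed
  have "card Good \<le> card (Ob \<times> PiE Tc (\<lambda>j. {..<m j}))"
    using card_inj_on_le[OF injf fG] finOb by (simp add: finite_PiE Tc_def)
  also have "\<dots> = card Ob * (\<Prod>j\<in>Tc. m j)" by (simp add: card_cartesian_product card_PiE Tc_def)
  finally have "real (card Good) \<le> real (card Ob) * (\<Prod>j\<in>Tc. real (m j))"
    by (metis of_nat_le_iff of_nat_mult of_nat_prod)
  with low PW have "(1 - real (card T) * \<epsilon>) * (\<Prod>j\<in>T. real (m j)) * (\<Prod>j\<in>Tc. real (m j))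
      \<le> real (card Ob) * (\<Prod>j\<in>Tc. real (m j))" by (simp add: algebra_simps)
  thus ?thesis using Tcpos by simp
qed

lemma rcv_i: "i \<noteq> 0 \<Longrightarrow> received K n N enc i w t r =
   (t < N \<and> r < qmax K n \<and> qmax K n - n i i \<le> r \<and> enc i (w i) t (r - (qmax K n - n i i)))"
  by (simp add: received_def chan_out_def shiftv_def)

lemma rcv_0: "received K n N enc 0 w t r =
   (t < N \<and> odd (card {j\<in>{0..K}. shiftv (qmax K n) (qmax K n - n 0 j) (enc j (w j) t) r}))"
  by (simp add: received_def chan_out_def)

lemma rcv_eq_i:
  assumes "i \<noteq> 0" "\<forall>t<N. \<forall>b<n i i. enc i (w i) t b = enc i (w' i) t b"
  shows "received K n N enc i w = received K n N enc i w'"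
proof (intro ext)
  fix t r
  show "received K n N enc i w t r = received K n N enc i w' t r"
  proof (cases "t < N \<and> r < qmax K n \<and> qmax K n - n i i \<le> r")
    case True
    hence "r - (qmax K n - n i i) < n i i" by linarith
    thus ?thesis using True assms by (simp add: rcv_i)
  next
    case False thus ?thesis using assms by (auto simp add: rcv_i)
  qed
qed

lemma card_bool_fun: "finite A \<Longrightarrow> card (PiE A (\<lambda>_. UNIV :: bool set)) = 2 ^ card A"
  by (simp add: card_PiE)

lemma indiv_key:
  assumes i: "1 \<le> i" "i \<le> K" and mpos: "\<forall>j\<le>K. 0 < m j"
  and err: "\<forall>i'\<in>{i}. err_prob K n N m enc dec i' \<le> \<epsilon>"
  shows "(1 - real (card {i}) * \<epsilon>) * (\<Prod>j\<in>{i}. real (m j)) \<le> 2 ^ (N * n i i)"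
proof -
  define q where "q = qmax K n"
  define P where "P = {..<N} \<times> {..<n i i}"
  define obs where "obs w = restrict (\<lambda>(t,b). received K n N enc i w t (q - n i i + b)) P" for w
  have nq: "n i i \<le> q" unfolding q_def qmax_def by (rule Max_ge) (use i in auto)
  have "(1 - real (card {i}) * \<epsilon>) * (\<Prod>j\<in>{i}. real (m j)) \<le> real (card (PiE P (\<lambda>_. UNIV :: bool set)))"
  proof (rule main_count[where obs = obs])
    show "{i} \<subseteq> {0..K}" using i by auto
    show "\<forall>j\<le>K. 0 < m j" by fact
    show "\<forall>i'\<in>{i}. err_prob K n N m enc dec i' \<le> \<epsilon>" by fact
    show "finite (PiE P (\<lambda>_. UNIV :: bool set))" unfolding P_def by (simp add: finite_PiE)
    show "obs w \<in> PiE P (\<lambda>_. UNIV)" for w unfolding obs_def by simp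
    fix w w' assume w: "w \<in> PiE {0..K} (\<lambda>j. {..<m j})" and w': "w' \<in> PiE {0..K} (\<lambda>j. {..<m j})"
      and d: "\<forall>i'\<in>{i}. dec i' (received K n N enc i' w) = w i'"
      and d': "\<forall>i'\<in>{i}. dec i' (received K n N enc i' w') = w' i'"
      and o: "obs w = obs w'" and oth: "\<forall>j\<in>{0..K} - {i}. w j = w' j"
    have "\<forall>t<N. \<forall>b<n i i. enc i (w i) t b = enc i (w' i) t b"
    proof (intro allI impI)
      fix t b assume tb: "t < N" "b < n i i"
      hence "(t,b) \<in> P" unfolding P_def by auto
      hence "received K n N enc i w t (q - n i i + b) = received K n N enc i w' t (q - n i i + b)"
        using fun_cong[OF o, of "(t,b)"] unfolding obs_def by simp
      moreover have lt: "qmax K n + b - n i i < qmax K n" using tb nq unfolding q_def by linarith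
      ultimately show "enc i (w i) t b = enc i (w' i) t b" using tb nq i by (simp add: rcv_i q_def)
    qed
    hence "received K n N enc i w = received K n N enc i w'" using i by (intro rcv_eq_i) auto
    hence "w i = w' i" using d d' by auto
    hence "\<forall>j\<in>{0..K}. w j = w' j" using oth by auto
    thus "w = w'" using w w' by (intro PiE_ext) auto
  qed
  also have "card (PiE P (\<lambda>_. UNIV :: bool set)) = 2 ^ (N * n i i)"
    unfolding P_def by (simp add: card_bool_fun card_cartesian_product)
  finally show ?thesis by simp
qed


lemma cont_coord: "continuous_on UNIV (\<lambda>r::nat\<Rightarrow>real. r i)" by simp

lemma closed_outer: "closed (outer_bound K n)"
proof -
  have e: "outer_bound K n = (\<Inter>i. {r. 0 \<le> r i}) \<inter> (\<Inter>i\<in>{K<..}. {r. r i = 0}) \<inter> (\<Inter>i\<in>{..K}. {r. r i \<le> real (n i i)})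
     \<inter> (\<Inter>S\<in>{S. S \<subseteq> {1..K} \<and> S \<noteq> {}}. {r. r 0 + (\<Sum>i\<in>S. r i) \<le> real ((\<Sum>i\<in>S. f_free n i) + (\<Sum>k=1..n 0 0. f_lvl K n k S))})"
    unfolding outer_bound_def by auto
  have c1: "closed {r::nat\<Rightarrow>real. 0 \<le> r i}" for i
    by (rule closed_Collect_le) (auto intro: continuous_intros)
  have c2: "closed {r::nat\<Rightarrow>real. r i = 0}" for i
    by (rule closed_Collect_eq) (auto intro: continuous_intros)
  have c3: "closed {r::nat\<Rightarrow>real. r i \<le> c}" for i c
    by (rule closed_Collect_le) (auto intro: continuous_intros)
  have c4: "closed {r::nat\<Rightarrow>real. r 0 + (\<Sum>i\<in>S. r i) \<le> c}" for S c
    by (rule closed_Collect_le) (auto intro!: continuous_intros)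
  show ?thesis unfolding e using c1 c2 c3 c4 by (intro closed_Int closed_INT) auto
qed

lemma rate_from_count:
  assumes ach: "achievable K n r" and T: "T \<subseteq> {0..K}"
  and key: "\<And>N m enc dec \<epsilon>. \<forall>j\<le>K. 0 < m j \<Longrightarrow> \<forall>i\<in>T. err_prob K n N m enc dec i \<le> \<epsilon> \<Longrightarrow>
     (1 - real (card T) * \<epsilon>) * (\<Prod>j\<in>T. real (m j)) \<le> 2 ^ (N * E)"
  shows "(\<Sum>j\<in>T. r j) \<le> real E"
proof (rule ccontr)
  assume H: "\<not> (\<Sum>j\<in>T. r j) \<le> real E"
  define d where "d = (\<Sum>j\<in>T. r j) - real E"
  have dpos: "d > 0" using H unfolding d_def by simp
  define \<epsilon> :: real where "\<epsilon> = 1 / (2 * (real K + 1))"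
  have epos: "\<epsilon> > 0" unfolding \<epsilon>_def by simp
  obtain N0 where N0: "\<forall>N\<ge>N0. \<exists>m enc dec. (\<forall>i\<le>K. 2 powr (real N * r i) \<le> real (m i)) \<and>
        (\<forall>i\<le>K. err_prob K n N m enc dec i \<le> \<epsilon>)"
    using ach epos unfolding achievable_def by blast
  define N where "N = max N0 (nat \<lceil>2 / d\<rceil> + 1)"
  have NN0: "N \<ge> N0" unfolding N_def by simp
  have Nd: "real N * d > 2"
  proof -
    have "real N \<ge> real (nat \<lceil>2 / d\<rceil>) + 1" unfolding N_def by simp
    moreover have "real (nat \<lceil>2 / d\<rceil>) \<ge> 2 / d" by linarith
    ultimately have "real N > 2 / d" by simp
    thus ?thesis using dpos by (simp add: divide_less_eq mult.commute)
  qed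
  obtain m enc dec where m: "\<forall>i\<le>K. 2 powr (real N * r i) \<le> real (m i)"
     and er: "\<forall>i\<le>K. err_prob K n N m enc dec i \<le> \<epsilon>" using N0 NN0 by blast
  have mpos: "\<forall>j\<le>K. 0 < m j"
  proof (intro allI impI)
    fix j assume "j \<le> K"
    hence "0 < real (m j)" using m by (smt (verit) powr_gt_zero)
    thus "0 < m j" by simp
  qed
  have finT: "finite T" using T finite_subset by blast
  have "card T \<le> card {0..K}" using T by (intro card_mono) auto
  hence cT: "real (card T) \<le> real K + 1" by simp
  have "real (card T) * \<epsilon> \<le> (real K + 1) * \<epsilon>" using cT epos by (simp add: mult_right_mono)
  also have "\<dots> = 1/2" unfolding \<epsilon>_def by (simp add: field_simps)
  finally have half: "1 - real (card T) * \<epsilon> \<ge> 1/2" by simp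
  have "2 powr (real N * (\<Sum>j\<in>T. r j)) = (\<Prod>j\<in>T. 2 powr (real N * r j))"
    by (simp add: sum_distrib_left powr_sum)
  also have "\<dots> \<le> (\<Prod>j\<in>T. real (m j))"
    by (rule prod_mono) (use m T in auto)
  finally have P: "2 powr (real N * (\<Sum>j\<in>T. r j)) \<le> (\<Prod>j\<in>T. real (m j))" .
  have Pnn: "(\<Prod>j\<in>T. real (m j)) \<ge> 0" by (simp add: prod_nonneg)
  have "(1/2) * (\<Prod>j\<in>T. real (m j)) \<le> (1 - real (card T) * \<epsilon>) * (\<Prod>j\<in>T. real (m j))"
    using mult_right_mono[OF half Pnn] by simp
  also have "\<dots> \<le> 2 ^ (N * E)" proof (rule key[of m N enc dec \<epsilon>, OF mpos])
    show "\<forall>i\<in>T. err_prob K n N m enc dec i \<le> \<epsilon>" using er T by auto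
  qed
  finally have "(\<Prod>j\<in>T. real (m j)) \<le> 2 * 2 ^ (N * E)" by simp
  also have "(2::real) * 2 ^ (N * E) = 2 powr (real N * real E + 1)"
    by (simp add: powr_add powr_realpow[symmetric] mult.commute)
  finally have X: "(\<Prod>j\<in>T. real (m j)) \<le> 2 powr (real N * real E + 1)" .
  have "2 powr (real N * (\<Sum>j\<in>T. r j)) \<le> 2 powr (real N * real E + 1)" using P X by linarith
  hence "real N * (\<Sum>j\<in>T. r j) \<le> real N * real E + 1" by simp
  hence "real N * d \<le> 1" unfolding d_def by (simp add: algebra_simps)
  thus False using Nd by simp
qed

lemma card_minus_Min: "finite A \<Longrightarrow> card (A - {Min A}) = card A - 1"
  by (cases "A = {}") (auto simp: card_Diff_singleton)

lemma card_arith: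
  fixes q :: nat
  assumes S: "S \<subseteq> {1..K}" and q00: "n 0 0 \<le> q" and q0i: "\<forall>i\<in>S. n 0 i \<le> q"
  shows "card {k\<in>{1..q}. k \<le> n 0 0 \<or> (\<exists>j\<in>S. k \<le> n 0 j)}
       + card (SIGMA i:S. {n 0 i..<n i i})
       + card (SIGMA k:{1..q}. (U K n k \<inter> S - {Min (U K n k \<inter> S)}))
     \<le> (\<Sum>i\<in>S. f_free n i) + (\<Sum>k=1..n 0 0. f_lvl K n k S)"
proof -
  have finS: "finite S" using S finite_subset by blast
  define u where "u k = card (U K n k \<inter> S)" for k
  define L where "L = {k\<in>{1..q}. k \<le> n 0 0 \<or> (\<exists>j\<in>S. k \<le> n 0 j)}"
  define c where "c k = card {j\<in>S. k \<le> n 0 j}" for k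
  have cB: "card (SIGMA i:S. {n 0 i..<n i i}) = (\<Sum>i\<in>S. n i i - n 0 i)"
    using finS by (simp add: card_SigmaI)
  have cC: "card (SIGMA k:{1..q}. (U K n k \<inter> S - {Min (U K n k \<inter> S)})) = (\<Sum>k\<in>{1..q}. u k - 1)"
    by (subst card_SigmaI) (auto simp: finS card_minus_Min u_def)
  have cL: "card L = (\<Sum>k\<in>{1..q}. if k \<in> L then 1 else 0)"
    unfolding L_def by (simp add: sum.If_cases Int_def)
  have split: "{1..q} = {1..n 0 0} \<union> {n 0 0<..q}" using q00 by auto
  have disj: "{1..n 0 0} \<inter> {n 0 0<..q} = {}" by auto
  have uc: "u k \<le> c k" for k
    unfolding u_def c_def U_def by (rule card_mono) (auto simp: finS)
  have low: "(if k \<in> L then 1 else 0) + (u k - 1) = f_lvl K n k S" if "k \<in> {1..n 0 0}" for k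
    using that q00 unfolding L_def f_lvl_def u_def by auto
  have high: "(if k \<in> L then 1 else 0) + (u k - 1) \<le> c k" if kin: "k \<in> {n 0 0<..q}" for k
  proof (cases "k \<in> L")
    case True
    obtain j where "j \<in> S" "k \<le> n 0 j" using kin True unfolding L_def by auto
    hence "c k \<ge> 1" unfolding c_def using finS
      by (metis (mono_tags, lifting) One_nat_def Suc_leI card_gt_0_iff empty_iff finite_subset mem_Collect_eq subsetI)
    thus ?thesis using True uc[of k] by simp
  next
    case False thus ?thesis using uc[of k] by simp
  qed
  have "card L + (\<Sum>k\<in>{1..q}. u k - 1) = (\<Sum>k\<in>{1..q}. (if k \<in> L then 1 else 0) + (u k - 1))"
    by (simp add: cL sum.distrib)
  also have "\<dots> = (\<Sum>k\<in>{1..n 0 0}. (if k \<in> L then 1 else 0) + (u k - 1)) + (\<Sum>k\<in>{n 0 0<..q}. (if k \<in> L then 1 else 0) + (u k - 1))"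
    unfolding split by (rule sum.union_disjoint) auto
  also have "\<dots> \<le> (\<Sum>k\<in>{1..n 0 0}. f_lvl K n k S) + (\<Sum>k\<in>{n 0 0<..q}. c k)"
    using low high by (intro add_mono sum_mono) auto
  also have "(\<Sum>k\<in>{n 0 0<..q}. c k) = (\<Sum>j\<in>S. n 0 j - n 0 0)"
  proof -
    have "(\<Sum>k\<in>{n 0 0<..q}. c k) = (\<Sum>k\<in>{n 0 0<..q}. \<Sum>j\<in>S. if k \<le> n 0 j then 1 else 0)"
      unfolding c_def using finS by (simp add: sum.If_cases Int_def)
    also have "\<dots> = (\<Sum>j\<in>S. \<Sum>k\<in>{n 0 0<..q}. if k \<le> n 0 j then 1 else 0)" by (rule sum.swap)
    also have "\<dots> = (\<Sum>j\<in>S. n 0 j - n 0 0)"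
    proof (rule sum.cong[OF refl])
      fix j assume "j \<in> S"
      hence "{n 0 0<..q} \<inter> {k. k \<le> n 0 j} = {n 0 0<..n 0 j}" using q0i by auto
      thus "(\<Sum>k\<in>{n 0 0<..q}. if k \<le> n 0 j then 1 else 0) = n 0 j - n 0 0"
        by (simp add: sum.If_cases)
    qed
    finally show ?thesis .
  qed
  finally have main: "card L + (\<Sum>k\<in>{1..q}. u k - 1) \<le> (\<Sum>k\<in>{1..n 0 0}. f_lvl K n k S) + (\<Sum>j\<in>S. n 0 j - n 0 0)" .
  have ff: "(\<Sum>i\<in>S. f_free n i) = (\<Sum>i\<in>S. n i i - n 0 i) + (\<Sum>j\<in>S. n 0 j - n 0 0)"
    unfolding f_free_def by (simp add: sum.distrib)
  show ?thesis unfolding L_def[symmetric] cB cC ff using main by simp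
qed
lemma parity_lemma:
  assumes "finite J" "i \<in> J" "\<forall>j\<in>J-{i}. P j = P' j"
    "odd (card {j\<in>J. P j}) = odd (card {j\<in>J. P' j})"
  shows "P i = P' i"
proof -
  have c: "card {j\<in>J. Q j} = card {j\<in>J-{i}. Q j} + (if Q i then 1 else 0)" for Q
  proof (cases "Q i")
    case True
    hence "{j\<in>J. Q j} = insert i {j\<in>J-{i}. Q j}" using assms(2) by auto
    thus ?thesis using True assms(1) by simp
  next
    case False
    hence "{j\<in>J. Q j} = {j\<in>J-{i}. Q j}" by auto
    thus ?thesis using False by simp
  qed
  have e: "{j\<in>J-{i}. P j} = {j\<in>J-{i}. P' j}" using assms(3) by auto
  have "odd (card {j\<in>J-{i}. P j} + (if P i then 1 else 0)) = odd (card {j\<in>J-{i}. P j} + (if P' i then 1 else 0))"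
    using assms(4) c[of P] c[of P'] e by simp
  thus ?thesis by (cases "P i"; cases "P' i") auto
qed

lemma shift_lvl:
  assumes "1 \<le> k" "k \<le> q" "m \<le> q"
  shows "shiftv q (q - m) x (q - k) = (k \<le> m \<and> x (m - k))"
proof -
  have "(q - m \<le> q - k) = (k \<le> m)" using assms by linarith
  moreover have "q - k - (q - m) = m - k" using assms by linarith
  moreover have "q - k < q" using assms by linarith
  ultimately show ?thesis unfolding shiftv_def by simp
qed
lemma q_facts: "n 0 0 \<le> qmax K n" "i \<le> K \<Longrightarrow> n i i \<le> qmax K n" "1 \<le> i \<Longrightarrow> i \<le> K \<Longrightarrow> n 0 i \<le> qmax K n"
proof -
  have fin: "finite ({n i i | i. i \<le> K} \<union> {n 0 i | i. 1 \<le> i \<and> i \<le> K})" by auto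
  show "n 0 0 \<le> qmax K n" unfolding qmax_def by (rule Max_ge[OF fin]) auto
  show "i \<le> K \<Longrightarrow> n i i \<le> qmax K n" unfolding qmax_def by (rule Max_ge[OF fin]) auto
  show "1 \<le> i \<Longrightarrow> i \<le> K \<Longrightarrow> n 0 i \<le> qmax K n" unfolding qmax_def by (rule Max_ge[OF fin]) auto
qed

lemma sum_key:
  assumes S: "S \<subseteq> {1..K}" and mpos: "\<forall>j\<le>K. 0 < m j"
  and err: "\<forall>i\<in>insert 0 S. err_prob K n N m enc dec i \<le> \<epsilon>"
  shows "(1 - real (card (insert 0 S)) * \<epsilon>) * (\<Prod>j\<in>insert 0 S. real (m j)) \<le>
     2 ^ (N * (card {k\<in>{1..qmax K n}. k \<le> n 0 0 \<or> (\<exists>j\<in>S. k \<le> n 0 j)}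
       + card (SIGMA i:S. {n 0 i..<n i i})
       + card (SIGMA k:{1..qmax K n}. (U K n k \<inter> S - {Min (U K n k \<inter> S)}))))"
proof -
  define q where "q = qmax K n"
  have finS: "finite S" using S finite_subset by blast
  have q00: "n 0 0 \<le> q" unfolding q_def qmax_def by (rule Max_ge) auto
  have q0i: "n 0 i \<le> q" if "i \<in> S" for i
  proof -
    have "1 \<le> i \<and> i \<le> K" using that S by auto
    thus ?thesis unfolding q_def by (intro q_facts(3)) auto
  qed
  have qii: "n i i \<le> q" if "i \<in> S" for i
  proof -
    have "1 \<le> i \<and> i \<le> K" using that S by auto
    thus ?thesis unfolding q_def by (intro q_facts(2)) auto
  qed
  define L where "L = {k\<in>{1..q}. k \<le> n 0 0 \<or> (\<exists>j\<in>S. k \<le> n 0 j)}"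
  define B1 where "B1 = (SIGMA i:S. {n 0 i..<n i i})"
  define C1 where "C1 = (SIGMA k:{1..q}. (U K n k \<inter> S - {Min (U K n k \<inter> S)}))"
  have finL: "finite L" unfolding L_def by auto
  have finB: "finite B1" unfolding B1_def using finS by auto
  have finC: "finite C1" unfolding C1_def using finS by auto
  define PA where "PA = {..<N} \<times> L"
  define PB where "PB = {..<N} \<times> B1"
  define PC where "PC = {..<N} \<times> C1"
  define rc where "rc = received K n N enc"
  define obs where "obs w = (restrict (\<lambda>(t,k). rc 0 w t (q - k)) PA,
      restrict (\<lambda>(t,(i,b)). rc i w t (q - n i i + b)) PB,
      restrict (\<lambda>(t,(k,i)). rc i w t (q - n i i + (n 0 i - k))) PC)" for w
  define Ob where "Ob = PiE PA (\<lambda>_. UNIV :: bool set) \<times> PiE PB (\<lambda>_. UNIV :: bool set) \<times> PiE PC (\<lambda>_. UNIV :: bool set)"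
  have finOb: "finite Ob" unfolding Ob_def PA_def PB_def PC_def using finL finB finC by (simp add: finite_PiE)
  have cOb: "card Ob = 2 ^ (N * (card L + card B1 + card C1))"
    unfolding Ob_def PA_def PB_def PC_def using finL finB finC
    by (simp add: card_cartesian_product card_bool_fun power_add[symmetric] algebra_simps)
  have rbit: "rc i w t (q - n i i + b) = enc i (w i) t b" if "i \<in> S" "t < N" "b < n i i" for i w t b
  proof -
    have "i \<noteq> 0" using that S by auto
    moreover have "q - n i i + b < q" "q - n i i \<le> q - n i i + b" "q - n i i + b - (q - n i i) = b"
      using that qii[of i] by auto
    ultimately show ?thesis using that unfolding rc_def q_def by (simp add: rcv_i)
  qed
  have "(1 - real (card (insert 0 S)) * \<epsilon>) * (\<Prod>j\<in>insert 0 S. real (m j)) \<le> real (card Ob)"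
  proof (rule main_count[where obs = obs])
    show "insert 0 S \<subseteq> {0..K}" using S by auto
    show "\<forall>j\<le>K. 0 < m j" by fact
    show "\<forall>i\<in>insert 0 S. err_prob K n N m enc dec i \<le> \<epsilon>" by fact
    show "finite Ob" by fact
    show "obs w \<in> Ob" for w unfolding obs_def Ob_def by simp
    fix w w' assume w: "w \<in> PiE {0..K} (\<lambda>j. {..<m j})" and w': "w' \<in> PiE {0..K} (\<lambda>j. {..<m j})"
      and d: "\<forall>i\<in>insert 0 S. dec i (received K n N enc i w) = w i"
      and d': "\<forall>i\<in>insert 0 S. dec i (received K n N enc i w') = w' i"
      and o: "obs w = obs w'" and oth: "\<forall>j\<in>{0..K} - insert 0 S. w j = w' j"
    have oA: "rc 0 w t (q - k) = rc 0 w' t (q - k)" if "t < N" "k \<in> L" for t k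
    proof -
      have "(t,k) \<in> PA" unfolding PA_def using that by auto
      thus ?thesis using fun_cong[OF arg_cong[where f=fst, OF o], of "(t,k)"] unfolding obs_def by simp
    qed
    have oB: "enc i (w i) t b = enc i (w' i) t b" if "t < N" "(i,b) \<in> B1" for t i b
    proof -
      have "(t,(i,b)) \<in> PB" unfolding PB_def using that by auto
      hence "rc i w t (q - n i i + b) = rc i w' t (q - n i i + b)"
        using fun_cong[OF arg_cong[where f="fst \<circ> snd", OF o], of "(t,(i,b))"] unfolding obs_def by simp
      thus ?thesis using rbit that unfolding B1_def by auto
    qed
    have oC: "enc i (w i) t (n 0 i - k) = enc i (w' i) t (n 0 i - k)" if "t < N" "(k,i) \<in> C1" for t i k
    proof -
      have "(t,(k,i)) \<in> PC" unfolding PC_def using that by auto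
      hence "rc i w t (q - n i i + (n 0 i - k)) = rc i w' t (q - n i i + (n 0 i - k))"
        using fun_cong[OF arg_cong[where f="snd \<circ> snd", OF o], of "(t,(k,i))"] unfolding obs_def by simp
      moreover have "i \<in> S" "n 0 i - k < n i i" using that unfolding C1_def U_def by auto
      ultimately show ?thesis using rbit that by auto
    qed
    have decS: "w i = w' i" if "i \<in> S" "\<forall>t<N. \<forall>b<n i i. enc i (w i) t b = enc i (w' i) t b" for i
    proof -
      have "i \<noteq> 0" using that S by auto
      hence "rc i w = rc i w'" using that(2) unfolding rc_def by (intro rcv_eq_i) auto
      thus ?thesis using d d' that(1) unfolding rc_def by force
    qed
    have "rc 0 w = rc 0 w'"
    proof (intro ext)
      fix t r
      show "rc 0 w t r = rc 0 w' t r"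
      proof (cases "t < N \<and> r < q \<and> q - r \<in> L")
        case True
        hence "q - (q - r) = r" by auto
        thus ?thesis using oA[of t "q - r"] True by simp
      next
        case False
        show ?thesis
        proof (cases "t < N")
          case False thus ?thesis unfolding rc_def by (simp add: rcv_0)
        next
          case tN: True
          have "{j\<in>{0..K}. shiftv q (q - n 0 j) (enc j (w j) t) r} = {j\<in>{0..K}. shiftv q (q - n 0 j) (enc j (w' j) t) r}"
          proof (intro Collect_cong conj_cong refl)
            fix j assume j: "j \<in> {0..K}"
            show "shiftv q (q - n 0 j) (enc j (w j) t) r = shiftv q (q - n 0 j) (enc j (w' j) t) r"
            proof (cases "j \<in> insert 0 S")
              case False thus ?thesis using oth j by auto
            next
              case True
              show ?thesis
              proof (cases "r < q")
                case tr: True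
                hence "q - r \<notin> L" using False tN by auto
                hence "\<not> (q - r \<le> n 0 j)" using True tr unfolding L_def by auto
                hence "\<not> (q - n 0 j \<le> r)" by linarith
                thus ?thesis unfolding shiftv_def by auto
              next
                case False
                thus ?thesis unfolding shiftv_def by auto
              qed
            qed
          qed
          thus ?thesis unfolding rc_def q_def by (simp add: rcv_0)
        qed
      qed
    qed
    hence w0: "w 0 = w' 0" using d d' unfolding rc_def by force
    define Q where "Q k = (\<forall>i\<in>S. \<forall>t<N. \<forall>b<n i i. b < n 0 i \<and> k \<le> n 0 i - b \<longrightarrow> enc i (w i) t b = enc i (w' i) t b)" for k
    have lvl: "Q k" if IH: "Q (Suc k)" for k
    proof -
      { fix i t b assume i: "i \<in> S" and t: "t < N" and b: "b < n i i" "b < n 0 i" "k \<le> n 0 i - b"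
        have "enc i (w i) t b = enc i (w' i) t b"
        proof (cases "k < n 0 i - b")
          case True thus ?thesis using IH i t b unfolding Q_def by auto
        next
          case False
          hence kk: "n 0 i - b = k" using b by simp
          have k1: "1 \<le> k" "k \<le> q" "k \<le> n 0 i" using kk b q0i[OF i] by auto
          have bk: "b = n 0 i - k" using kk b by auto
          define M where "M = Min (U K n k \<inter> S)"
          have iU: "i \<in> U K n k \<inter> S" using i S kk b unfolding U_def by auto
          show ?thesis
          proof (cases "i = M")
            case False
            hence "(k,i) \<in> C1" unfolding C1_def M_def using iU k1 by auto
            thus ?thesis using oC[OF t] bk by auto
          next
            case True
            have kL: "k \<in> L" unfolding L_def using k1 i by auto
            define Z where "Z v j = shiftv q (q - n 0 j) (enc j (v j) t) (q - k)" for v j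
            have par: "odd (card {j\<in>{0..K}. Z w j}) = odd (card {j\<in>{0..K}. Z w' j})"
              using oA[OF t kL] t unfolding rc_def Z_def q_def by (simp add: rcv_0)
            have Zs: "Z v j = (k \<le> n 0 j \<and> enc j (v j) t (n 0 j - k))" if "j \<in> insert 0 S" for v j
            proof -
              have "n 0 j \<le> q" using that q00 q0i by auto
              thus ?thesis unfolding Z_def using shift_lvl[OF k1(1) k1(2)] by blast
            qed
            have oth': "\<forall>j\<in>{0..K}-{i}. Z w j = Z w' j"
            proof
              fix j assume j: "j \<in> {0..K} - {i}"
              show "Z w j = Z w' j"
              proof (cases "j \<in> insert 0 S")
                case False thus ?thesis using oth j unfolding Z_def by auto
              next
                case jS: True
                show ?thesis
                proof (cases "j = 0")
                  case True thus ?thesis using w0 unfolding Z_def by simp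
                next
                  case j0: False
                  hence jS': "j \<in> S" using jS by auto
                  show ?thesis
                  proof (cases "k \<le> n 0 j")
                    case False thus ?thesis using Zs[OF jS] by auto
                  next
                    case kj: True
                    show ?thesis
                    proof (cases "n 0 j - k < n j j")
                      case True
                      hence "j \<in> U K n k \<inter> S" using jS' S kj unfolding U_def by auto
                      moreover have "j \<noteq> M" using \<open>i = M\<close> j by auto
                      ultimately have "(k,j) \<in> C1" unfolding C1_def M_def using k1 by auto
                      thus ?thesis using oC[OF t] Zs[OF jS] by auto
                    next
                      case False
                      have "\<forall>t'<N. \<forall>b'<n j j. enc j (w j) t' b' = enc j (w' j) t' b'"
                      proof (intro allI impI)
                        fix t' b' assume t': "t' < N" and b': "b' < n j j"
                        have "b' < n 0 j" "Suc k \<le> n 0 j - b'" using False b' kj k1 by auto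
                        thus "enc j (w j) t' b' = enc j (w' j) t' b'" using IH jS' t' b' unfolding Q_def by auto
                      qed
                      hence "w j = w' j" using decS[OF jS'] by auto
                      thus ?thesis unfolding Z_def by simp
                    qed
                  qed
                qed
              qed
            qed
            have "i \<in> {0..K}" using i S by auto
            hence "Z w i = Z w' i" using parity_lemma[of "{0..K}" i "Z w" "Z w'"] oth' par by auto
            thus ?thesis using Zs[of i] i k1 bk by auto
          qed
        qed }
      thus ?thesis unfolding Q_def by blast
    qed
    have Qd: "Q (q + 1 - d)" for d
    proof (induction d)
      case 0
      show ?case unfolding Q_def using q0i by fastforce
    next
      case (Suc d)
      show ?case
      proof (cases "d \<le> q")
        case True
        hence "q + 1 - d = Suc (q - d)" "q + 1 - Suc d = q - d" by auto
        thus ?thesis using lvl Suc by metis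
      next
        case False
        hence "q + 1 - Suc d = q + 1 - d" by auto
        thus ?thesis using Suc by simp
      qed
    qed
    have Q0: "Q 0" using Qd[of "q + 1"] by simp
    have wS: "w j = w' j" if "j \<in> S" for j
    proof (rule decS[OF that], intro allI impI)
      fix t b assume t: "t < N" and b: "b < n j j"
      show "enc j (w j) t b = enc j (w' j) t b"
      proof (cases "b < n 0 j")
        case True thus ?thesis using Q0 that t b unfolding Q_def by auto
      next
        case False
        hence "(j,b) \<in> B1" unfolding B1_def using that b by auto
        thus ?thesis using oB t by auto
      qed
    qed
    have "\<forall>j\<in>{0..K}. w j = w' j" using w0 wS oth by auto
    thus "w = w'" using w w' by (intro PiE_ext) auto
  qed
  thus ?thesis using cOb unfolding L_def B1_def C1_def q_def by simp
qed

lemma key_S: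
  assumes S: "S \<subseteq> {1..K}" and mpos: "\<forall>j\<le>K. 0 < m j"
  and err: "\<forall>i\<in>insert 0 S. err_prob K n N m enc dec i \<le> \<epsilon>"
  shows "(1 - real (card (insert 0 S)) * \<epsilon>) * (\<Prod>j\<in>insert 0 S. real (m j)) \<le>
     2 ^ (N * ((\<Sum>i\<in>S. f_free n i) + (\<Sum>k=1..n 0 0. f_lvl K n k S)))"
proof -
  have c: "card {k\<in>{1..qmax K n}. k \<le> n 0 0 \<or> (\<exists>j\<in>S. k \<le> n 0 j)}
       + card (SIGMA i:S. {n 0 i..<n i i})
       + card (SIGMA k:{1..qmax K n}. (U K n k \<inter> S - {Min (U K n k \<inter> S)}))
     \<le> (\<Sum>i\<in>S. f_free n i) + (\<Sum>k=1..n 0 0. f_lvl K n k S)"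
  proof (rule card_arith[OF S])
    show "n 0 0 \<le> qmax K n" by (rule q_facts(1))
    show "\<forall>i\<in>S. n 0 i \<le> qmax K n"
    proof
      fix i assume "i \<in> S"
      hence "1 \<le> i" "i \<le> K" using S by auto
      thus "n 0 i \<le> qmax K n" by (rule q_facts(3))
    qed
  qed
  have "(2::real) ^ (N * (card {k\<in>{1..qmax K n}. k \<le> n 0 0 \<or> (\<exists>j\<in>S. k \<le> n 0 j)}
       + card (SIGMA i:S. {n 0 i..<n i i})
       + card (SIGMA k:{1..qmax K n}. (U K n k \<inter> S - {Min (U K n k \<inter> S)}))))
     \<le> 2 ^ (N * ((\<Sum>i\<in>S. f_free n i) + (\<Sum>k=1..n 0 0. f_lvl K n k S)))"
    by (rule power_increasing) (use c in auto)
  thus ?thesis using sum_key[OF S mpos err] by linarith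
qed

theorem lemma1:
  fixes K :: nat and n :: "nat \<Rightarrow> nat \<Rightarrow> nat"
  shows "capacity_region K n \<subseteq> outer_bound K n"
proof -
  have "{r. achievable K n r} \<subseteq> outer_bound K n"
  proof
    fix r assume "r \<in> {r. achievable K n r}"
    hence ach: "achievable K n r" by simp
    have nn: "\<forall>i. 0 \<le> r i" and zz: "\<forall>i>K. r i = 0" using ach unfolding achievable_def by auto
    have ind: "r i \<le> real (n i i)" if "i \<le> K" for i
    proof (cases "i = 0")
      case True
      have "(\<Sum>j\<in>{0}. r j) \<le> real (n 0 0)"
      proof (rule rate_from_count[OF ach])
        show "{0} \<subseteq> {0..K}" by auto
        fix N m enc dec \<epsilon>
        assume mp: "\<forall>j\<le>K. 0 < m j" and er: "\<forall>i\<in>{0}. err_prob K n N m enc dec i \<le> \<epsilon>"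
        have "(1 - real (card (insert 0 {})) * \<epsilon>) * (\<Prod>j\<in>insert 0 {}. real (m j)) \<le>
            2 ^ (N * ((\<Sum>i\<in>{}. f_free n i) + (\<Sum>k=1..n 0 0. f_lvl K n k {})))"
          using key_S[of "{}" K m n N enc dec \<epsilon>] mp er by auto
        moreover have "(\<Sum>k=1..n 0 0. f_lvl K n k {}) = n 0 0" by (simp add: f_lvl_def)
        ultimately show "(1 - real (card {0::nat}) * \<epsilon>) * (\<Prod>j\<in>{0}. real (m j)) \<le> 2 ^ (N * n 0 0)" by simp
      qed
      thus ?thesis using True by simp
    next
      case False
      have "(\<Sum>j\<in>{i}. r j) \<le> real (n i i)"
      proof (rule rate_from_count[OF ach])
        show "{i} \<subseteq> {0..K}" using that by auto
        fix N m enc dec \<epsilon>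
        assume mp: "\<forall>j\<le>K. 0 < m j" and er: "\<forall>i'\<in>{i}. err_prob K n N m enc dec i' \<le> \<epsilon>"
        show "(1 - real (card {i}) * \<epsilon>) * (\<Prod>j\<in>{i}. real (m j)) \<le> 2 ^ (N * n i i)"
          by (rule indiv_key) (use mp er that False in auto)
      qed
      thus ?thesis by simp
    qed
    have sumb: "r 0 + (\<Sum>i\<in>S. r i) \<le> real ((\<Sum>i\<in>S. f_free n i) + (\<Sum>k=1..n 0 0. f_lvl K n k S))"
      if S: "S \<subseteq> {1..K}" for S
    proof -
      have finS: "finite S" using S finite_subset by blast
      have "0 \<notin> S" using S by auto
      hence e: "(\<Sum>j\<in>insert 0 S. r j) = r 0 + (\<Sum>i\<in>S. r i)" using finS by simp
      have "(\<Sum>j\<in>insert 0 S. r j) \<le> real ((\<Sum>i\<in>S. f_free n i) + (\<Sum>k=1..n 0 0. f_lvl K n k S))"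
      proof (rule rate_from_count[OF ach])
        show "insert 0 S \<subseteq> {0..K}" using S by auto
        fix N m enc dec \<epsilon>
        assume mp: "\<forall>j\<le>K. 0 < m j" and er: "\<forall>i\<in>insert 0 S. err_prob K n N m enc dec i \<le> \<epsilon>"
        show "(1 - real (card (insert 0 S)) * \<epsilon>) * (\<Prod>j\<in>insert 0 S. real (m j)) \<le>
            2 ^ (N * ((\<Sum>i\<in>S. f_free n i) + (\<Sum>k=1..n 0 0. f_lvl K n k S)))"
          by (rule key_S[OF S mp er])
      qed
      thus ?thesis using e by simp
    qed
    show "r \<in> outer_bound K n" unfolding outer_bound_def using nn zz ind sumb by auto
  qed
  thus ?thesis unfolding capacity_region_def using closed_outer by (rule closure_minimal)
qed
end
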